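(* (Differential equation.) Let $k\in\mathbb{N}$, let $H_k\in\mathcal{H}_k$ be a Dunkl-harmonic of degree $k$, and let $t$ be a positive integer. Then the Clifford--Hermite polynomial $C\!H_{2t}^{\mu}(H_k)=(D_+)^{2t}H_k$ satisfies \[ \big[\Delta_{\kappa} - 2\mathbb{E}\big]\, C\!H_{2t}^{\mu}(H_k) = -2(2t+k)\, C\!H_{2t}^{\mu}(H_k). \]
   Context: Let $R\subset\mathbb{R}^m$ be a reduced root system normalized so that $\langle\alpha,\alpha\rangle=2$ for all $\alpha\in R$, with positive subsystem $R_+$, and let $G\subset O(m)$ be the finite reflection group generated by the reflections $r_\alpha(x)=x-2\frac{\langle\alpha,x\rangle}{|\alpha|^2}\alpha$, $\alpha\in R$. Let $\kappa:R\to\mathbb{C}$ be a $G$-invariant multiplicity function, $\kappa_\alpha=\kappa(\alpha)$. The Dunkl operators are $T_i f(x)=\partial_{x_i}f(x)+\sum_{\alpha\in R_+}\kappa_\alpha\alpha_i\frac{f(x)-f(r_\alpha x)}{\langle\alpha,x\rangle}$, $i=1,\dots,m$; they commute. The Dunkl Laplacian is $\Delta_\kappa=\sum_{i=1}^m T_i^2$. Put $\gamma=\sum_{\alpha\in R_+}\kappa_\alpha$ and $\mu=m+2\gamma$. $\mathbb{E}=\sum_{i=1}^m x_i\partial_{x_i}$ is the Euler operator. $\mathcal{P}_k$ denotes real homogeneous polynomials of degree $k$ on $\mathbb{R}^m$ and $\mathcal{H}_k=\mathcal{P}_k\cap\ker\Delta_\kappa$. Let $\mathcal{C}l_{0,m}$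 be the Clifford algebra generated by $e_1,\dots,e_m$ with $e_ie_j+e_je_i=-2\delta_{ij}$. Set $\underline{x}=\sum_i e_ix_i$, $D_\kappa=\sum_i e_iT_i$, and $D_+=-D_\kappa+2\underline{x}$. The Clifford--Hermite polynomial is $C\!H_{2t}^{\mu}(H_k)=(D_+)^{2t}H_k$ (a scalar polynomial, since $D_+^2=-\Delta_\kappa-4|x|^2+2(2\mathbb{E}+\mu)$). *)

theory Defs
  imports "HOL-Analysis.Analysis"
begin

definition root_refl :: "real^'n \<Rightarrow> real^'n \<Rightarrow> real^'n" where
  "root_refl \<alpha> x = x - (2 * (\<alpha> \<bullet> x) / (\<alpha> \<bullet> \<alpha>)) *\<^sub>R \<alpha>"

definition reduced_root_system :: "(real^'n) set \<Rightarrow> bool" where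
  "reduced_root_system R \<longleftrightarrow> finite R \<and> 0 \<notin> R \<and>
     (\<forall>\<alpha>\<in>R. root_refl \<alpha> ` R = R) \<and>
     (\<forall>\<alpha>\<in>R. \<forall>c::real. c *\<^sub>R \<alpha> \<in> R \<longrightarrow> c = 1 \<or> c = -1)"

definition positive_subsystem :: "(real^'n) set \<Rightarrow> (real^'n) set \<Rightarrow> bool" where
  "positive_subsystem R Rp \<longleftrightarrow>
     (\<exists>\<beta>. (\<forall>\<alpha>\<in>R. \<alpha> \<bullet> \<beta> \<noteq> 0) \<and> Rp = {\<alpha>\<in>R. \<alpha> \<bullet> \<beta> > 0})"

inductive_set refl_group :: "(real^'n) set \<Rightarrow> (real^'n \<Rightarrow> real^'n) set" for R where
  rg_id: "id \<in> refl_group R"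
| rg_step: "g \<in> refl_group R \<Longrightarrow> \<alpha> \<in> R \<Longrightarrow> root_refl \<alpha> \<circ> g \<in> refl_group R"

definition multiplicity_function :: "(real^'n) set \<Rightarrow> (real^'n \<Rightarrow> complex) \<Rightarrow> bool" where
  "multiplicity_function R \<kappa> \<longleftrightarrow> (\<forall>g\<in>refl_group R. \<forall>\<alpha>\<in>R. g \<alpha> \<in> R \<and> \<kappa> (g \<alpha>) = \<kappa> \<alpha>)"

text \<open>Difference quotient (f x - f(r_alpha x))/<alpha,x>, extended on the hyperplane
  <alpha,x> = 0 by its limit (the directional derivative along alpha, valid since |alpha|^2 = 2).\<close>
definition divdiff :: "real^'n \<Rightarrow> (real^'n \<Rightarrow> complex) \<Rightarrow> real^'n \<Rightarrow> complex" where
  "divdiff \<alpha> f x = (if \<alpha> \<bullet> x = 0 then frechet_derivative f (at x) \<alpha>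
                     else (f x - f (root_refl \<alpha> x)) / complex_of_real (\<alpha> \<bullet> x))"

definition dunkl :: "(real^'n) set \<Rightarrow> (real^'n \<Rightarrow> complex) \<Rightarrow> 'n \<Rightarrow> (real^'n \<Rightarrow> complex) \<Rightarrow> real^'n \<Rightarrow> complex" where
  "dunkl Rp \<kappa> i f x = frechet_derivative f (at x) (axis i 1)
     + (\<Sum>\<alpha>\<in>Rp. \<kappa> \<alpha> * complex_of_real (\<alpha> $ i) * divdiff \<alpha> f x)"

definition dunkl_lap :: "(real^'n) set \<Rightarrow> (real^'n \<Rightarrow> complex) \<Rightarrow> (real^'n \<Rightarrow> complex) \<Rightarrow> real^'n \<Rightarrow> complex" where
  "dunkl_lap Rp \<kappa> f x = (\<Sum>i\<in>UNIV. dunkl Rp \<kappa> i (dunkl Rp \<kappa> i f) x)"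

definition euler_op :: "(real^'n \<Rightarrow> complex) \<Rightarrow> real^'n \<Rightarrow> complex" where
  "euler_op f x = (\<Sum>i\<in>UNIV. complex_of_real (x $ i) * frechet_derivative f (at x) (axis i 1))"

definition homog_poly :: "nat \<Rightarrow> (real^'n \<Rightarrow> real) \<Rightarrow> bool" where
  "homog_poly k p \<longleftrightarrow> (\<exists>c :: ('n \<Rightarrow> nat) \<Rightarrow> real.
     \<forall>x. p x = (\<Sum>a\<in>{a. sum a UNIV = k}. c a * (\<Prod>i\<in>UNIV. (x $ i) ^ a i)))"

definition dunkl_harmonics :: "(real^'n) set \<Rightarrow> (real^'n \<Rightarrow> complex) \<Rightarrow> nat \<Rightarrow> (real^'n \<Rightarrow> real) set" where
  "dunkl_harmonics Rp \<kappa> k = {H. homog_poly k H \<and>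
     (\<forall>x. dunkl_lap Rp \<kappa> (\<lambda>y. complex_of_real (H y)) x = 0)}"

section \<open>Complex Clifford algebra Cl_{0,m}: elements are coefficient functions on blades e_A, A \<subseteq> index set\<close>

type_synonym 'n clif = "'n set \<Rightarrow> complex"

text \<open>e_A e_B = sign(A,B) e_{A symdiff B}, with e_i e_j = - e_j e_i (i \<noteq> j) and e_i^2 = -1.\<close>
definition clif_sign :: "('n::{finite,linorder}) set \<Rightarrow> 'n set \<Rightarrow> complex" where
  "clif_sign A B = (-1) ^ (card {(i,j). i \<in> A \<and> j \<in> B \<and> j < i} + card (A \<inter> B))"

definition clif_mult :: "('n::{finite,linorder}) clif \<Rightarrow> 'n clif \<Rightarrow> 'n clif" where
  "clif_mult a b = (\<lambda>C. \<Sum>A\<in>UNIV. \<Sum>B\<in>UNIV.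
      (if (A - B) \<union> (B - A) = C then clif_sign A B * a A * b B else 0))"

definition clif_e :: "('n::{finite,linorder}) \<Rightarrow> 'n clif" where
  "clif_e i = (\<lambda>A. if A = {i} then 1 else 0)"

definition clif_scalar :: "complex \<Rightarrow> ('n::{finite,linorder}) clif" where
  "clif_scalar c = (\<lambda>A. if A = {} then c else 0)"

definition clif_x :: "(real,'n) vec \<Rightarrow> ('n::{finite,linorder}) clif" where
  "clif_x x = (\<lambda>A. \<Sum>i\<in>UNIV. if A = {i} then complex_of_real (x $ i) else 0)"

definition dunkl_cl :: "((real,'n) vec) set \<Rightarrow> ((real,'n) vec \<Rightarrow> complex) \<Rightarrow> 'n \<Rightarrow> ((real,'n) vec \<Rightarrow> ('n::{finite,linorder}) clif) \<Rightarrow> (real,'n) vec \<Rightarrow> 'n clif" where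
  "dunkl_cl Rp \<kappa> i F x = (\<lambda>A. dunkl Rp \<kappa> i (\<lambda>y. F y A) x)"

definition dirac_dunkl :: "((real,'n) vec) set \<Rightarrow> ((real,'n) vec \<Rightarrow> complex) \<Rightarrow> ((real,'n) vec \<Rightarrow> ('n::{finite,linorder}) clif) \<Rightarrow> (real,'n) vec \<Rightarrow> 'n clif" where
  "dirac_dunkl Rp \<kappa> F x = (\<lambda>C. \<Sum>i\<in>UNIV. clif_mult (clif_e i) (dunkl_cl Rp \<kappa> i F x) C)"

definition D_plus :: "((real,'n) vec) set \<Rightarrow> ((real,'n) vec \<Rightarrow> complex) \<Rightarrow> ((real,'n) vec \<Rightarrow> ('n::{finite,linorder}) clif) \<Rightarrow> (real,'n) vec \<Rightarrow> 'n clif" where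
  "D_plus Rp \<kappa> F x = (\<lambda>C. - dirac_dunkl Rp \<kappa> F x C + 2 * clif_mult (clif_x x) (F x) C)"

definition clifford_hermite :: "((real,'n) vec) set \<Rightarrow> ((real,'n) vec \<Rightarrow> complex) \<Rightarrow> nat \<Rightarrow> ((real,'n) vec \<Rightarrow> real) \<Rightarrow> (real,'n) vec \<Rightarrow> ('n::{finite,linorder}) clif" where
  "clifford_hermite Rp \<kappa> t H = (D_plus Rp \<kappa> ^^ (2 * t)) (\<lambda>x. clif_scalar (complex_of_real (H x)))"

end

theory Submission
  imports Defs
begin

inductive_set PP :: "(real^'n \<Rightarrow> complex) set" where
  pc: "(\<lambda>x. c) \<in> PP"
| px: "q \<in> PP \<Longrightarrow> (\<lambda>x. complex_of_real (x$z) * q x) \<in> PP"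
| pa: "p \<in> PP \<Longrightarrow> q \<in> PP \<Longrightarrow> (\<lambda>x. p x + q x) \<in> PP"

abbreviation fd :: "(real^'n \<Rightarrow> complex) \<Rightarrow> real^'n \<Rightarrow> real^'n \<Rightarrow> complex" where
  "fd q x \<equiv> frechet_derivative q (at x)"

lemma coord_deriv: "((\<lambda>y::real^'n. complex_of_real (y$z)) has_derivative (\<lambda>v. complex_of_real (v$z))) (at x)"
proof -
  have "((\<lambda>y::real^'n. y$z) has_derivative (\<lambda>v. v$z)) (at x)"
    by (rule bounded_linear_imp_has_derivative) (rule bounded_linear_vec_nth)
  then show ?thesis using has_derivative_of_real by blast
qed

lemma PP_diff: "q \<in> PP \<Longrightarrow> (q has_derivative fd q x) (at x)"
proof (induction q rule: PP.induct)
  case (pc c) then show ?case by (simp add: frechet_derivative_at[symmetric])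
next
  case (px q z)
  have "((\<lambda>x. complex_of_real (x$z) * q x) has_derivative
      (\<lambda>h. complex_of_real (x$z) * fd q x h + complex_of_real (h$z) * q x)) (at x)"
    by (rule has_derivative_mult[OF coord_deriv px.IH])
  then show ?case by (simp add: frechet_derivative_at[symmetric])
next
  case (pa p q)
  have "((\<lambda>x. p x + q x) has_derivative (\<lambda>h. fd p x h + fd q x h)) (at x)"
    by (rule has_derivative_add[OF pa.IH])
  then show ?case by (simp add: frechet_derivative_at[symmetric])
qed

lemma fd_eq: "(f has_derivative f') (at x) \<Longrightarrow> fd f x = f'"
  by (simp add: frechet_derivative_at[symmetric])

lemma fd_add: "p \<in> PP \<Longrightarrow> q \<in> PP \<Longrightarrow> fd (\<lambda>x. p x + q x) x h = fd p x h + fd q x h"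
proof -
  assume a: "p \<in> PP" "q \<in> PP"
  have "fd (\<lambda>x. p x + q x) x = (\<lambda>h. fd p x h + fd q x h)"
    by (rule fd_eq, rule has_derivative_add, rule PP_diff[OF a(1)], rule PP_diff[OF a(2)])
  then show ?thesis by simp
qed

lemma fd_xmult: "q \<in> PP \<Longrightarrow> fd (\<lambda>x. complex_of_real (x$z) * q x) x h = complex_of_real (h$z) * q x + complex_of_real (x$z) * fd q x h"
proof -
  assume a: "q \<in> PP"
  have "fd (\<lambda>x. complex_of_real (x$z) * q x) x = (\<lambda>h. complex_of_real (x$z) * fd q x h + complex_of_real (h$z) * q x)"
    by (rule fd_eq, rule has_derivative_mult, rule coord_deriv, rule PP_diff[OF a])
  then show ?thesis by simp
qed

lemma fd_const: "fd (\<lambda>x. c) x h = 0"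
proof -
  have "fd (\<lambda>x. c) x = (\<lambda>h. 0)" by (rule fd_eq, rule has_derivative_const)
  then show ?thesis by simp
qed

lemma PP_cmult: "q \<in> PP \<Longrightarrow> (\<lambda>x. c * q x) \<in> PP"
proof (induction q rule: PP.induct)
  case (pc d) then show ?case using PP.pc by auto
next
  case (px q z) then show ?case using PP.px[of "\<lambda>x. c * q x" z] by (simp add: mult.left_commute)
next
  case (pa p q) then show ?case using PP.pa[of "\<lambda>x. c * p x" "\<lambda>x. c * q x"] by (simp add: distrib_left)
qed

lemma PP_mult: "p \<in> PP \<Longrightarrow> q \<in> PP \<Longrightarrow> (\<lambda>x. p x * q x) \<in> PP"
proof (induction p rule: PP.induct)
  case (pc d) then show ?case using PP_cmult by auto
next
  case (px p z) then show ?case using PP.px[of "\<lambda>x. p x * q x" z] by (simp add: mult.assoc)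
next
  case (pa p1 p2) then show ?case using PP.pa[of "\<lambda>x. p1 x * q x" "\<lambda>x. p2 x * q x"] by (simp add: distrib_right)
qed

lemma PP_sum: "(\<And>i. i \<in> S \<Longrightarrow> f i \<in> PP) \<Longrightarrow> (\<lambda>x. \<Sum>i\<in>S. f i x) \<in> PP"
proof (cases "finite S")
  case True
  assume "\<And>i. i \<in> S \<Longrightarrow> f i \<in> PP"
  with True show ?thesis
  proof (induction S rule: finite_induct)
    case empty then show ?case using PP.pc[of 0] by simp
  next
    case (insert a S) then show ?case using PP.pa[of "f a" "\<lambda>x. \<Sum>i\<in>S. f i x"] by simp
  qed
next
  case False then show ?thesis using PP.pc[of 0] by simp
qed

lemma PP_coord: "(\<lambda>x. complex_of_real (x$z)) \<in> PP"
  using PP.px[OF PP.pc[of 1], of z] by simp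

lemma PP_inner: "q \<in> PP \<Longrightarrow> (\<lambda>x. complex_of_real (a \<bullet> x) * q x) \<in> PP"
proof -
  assume q: "q \<in> PP"
  have "(\<lambda>x. \<Sum>j\<in>UNIV. complex_of_real (x$j) * (complex_of_real (a$j) * q x)) \<in> PP"
    by (rule PP_sum, rule PP.px, rule PP_cmult, rule q)
  moreover have "(\<Sum>j\<in>UNIV. complex_of_real (x$j) * (complex_of_real (a$j) * q x)) = complex_of_real (a \<bullet> x) * q x" for x
    by (simp add: inner_vec_def sum_distrib_right mult.assoc mult.left_commute)
  ultimately show ?thesis by simp
qed

lemma PP_fd: "q \<in> PP \<Longrightarrow> (\<lambda>x. fd q x h) \<in> PP"
proof (induction q rule: PP.induct)
  case (pc c) then show ?case using fd_const PP.pc[of 0] by simp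
next
  case (px q z)
  have "(\<lambda>x. complex_of_real (h$z) * q x + complex_of_real (x$z) * fd q x h) \<in> PP"
    using px by (intro PP.pa PP_cmult PP.px)
  moreover have "(\<lambda>x. fd (\<lambda>y. complex_of_real (y$z) * q y) x h) = (\<lambda>x. complex_of_real (h$z) * q x + complex_of_real (x$z) * fd q x h)"
    by (rule ext, rule fd_xmult[OF px.hyps])
  ultimately show ?case by (simp only:)
next
  case (pa p q)
  have eq: "(\<lambda>x. fd (\<lambda>y. p y + q y) x h) = (\<lambda>x. fd p x h + fd q x h)"
    by (rule ext, rule fd_add[OF pa.hyps])
  show ?case unfolding eq by (rule PP.pa[OF pa.IH])
qed

lemma rr_simp: "\<alpha> \<bullet> \<alpha> = 2 \<Longrightarrow> root_refl \<alpha> x = x - (\<alpha> \<bullet> x) *\<^sub>R \<alpha>"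
  by (simp add: root_refl_def)

lemma rr_linear: "bounded_linear (root_refl \<alpha>)"
proof -
  have e: "root_refl \<alpha> = (\<lambda>x. x - ((2 / (\<alpha> \<bullet> \<alpha>)) * (\<alpha> \<bullet> x)) *\<^sub>R \<alpha>)"
    by (rule ext) (simp add: root_refl_def)
  have "bounded_linear (\<lambda>x. ((2 / (\<alpha> \<bullet> \<alpha>)) * (\<alpha> \<bullet> x)) *\<^sub>R \<alpha>)"
    using bounded_linear_compose[OF bounded_linear_scaleR_left[of \<alpha>]
       bounded_linear_compose[OF bounded_linear_mult_right[of "2 / (\<alpha> \<bullet> \<alpha>)"] bounded_linear_inner_right[of \<alpha>]]]
    by simp
  then show ?thesis unfolding e by (rule bounded_linear_sub[OF bounded_linear_ident])
qed

lemma rr_add: "root_refl \<alpha> (x + y) = root_refl \<alpha> x + root_refl \<alpha> y"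
  using rr_linear[of \<alpha>] by (simp add: linear_add bounded_linear.linear)

lemma rr_scale: "root_refl \<alpha> (c *\<^sub>R x) = c *\<^sub>R root_refl \<alpha> x"
  using rr_linear[of \<alpha>] by (simp add: linear_scale bounded_linear.linear)

lemma rr_inner: "\<alpha> \<bullet> \<alpha> = 2 \<Longrightarrow> root_refl \<alpha> a \<bullet> root_refl \<alpha> b = a \<bullet> b"
  by (simp add: rr_simp inner_diff_left inner_diff_right inner_commute algebra_simps)

lemma rr_invol: "\<alpha> \<bullet> \<alpha> = 2 \<Longrightarrow> root_refl \<alpha> (root_refl \<alpha> x) = x"
  by (simp add: rr_simp inner_diff_right algebra_simps)

lemma rr_self: "\<alpha> \<bullet> \<alpha> = 2 \<Longrightarrow> root_refl \<alpha> \<alpha> = - \<alpha>"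
  by (simp add: rr_simp vec_eq_iff)

lemma rr_neg: "root_refl (- \<alpha>) = root_refl \<alpha>"
  by (rule ext) (simp add: root_refl_def)

lemma rr_fix: "\<alpha> \<bullet> x = 0 \<Longrightarrow> root_refl \<alpha> x = x"
  by (simp add: root_refl_def)

lemma rr_conj: "\<alpha> \<bullet> \<alpha> = 2 \<Longrightarrow> \<beta> \<bullet> \<beta> = 2 \<Longrightarrow>
   root_refl (root_refl \<beta> \<alpha>) (root_refl \<beta> x) = root_refl \<beta> (root_refl \<alpha> x)"
proof -
  assume a: "\<alpha> \<bullet> \<alpha> = 2" and b: "\<beta> \<bullet> \<beta> = 2"
  have n: "root_refl \<beta> \<alpha> \<bullet> root_refl \<beta> \<alpha> = 2" using rr_inner[OF b] a by simp
  show ?thesis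
    unfolding rr_simp[OF n] rr_simp[OF a] rr_inner[OF b]
    by (simp add: rr_add[symmetric] rr_scale[symmetric] algebra_simps)
qed

lemma coord_rr: "\<alpha> \<bullet> \<alpha> = 2 \<Longrightarrow> root_refl \<alpha> x $ z = x $ z - (\<alpha> \<bullet> x) * \<alpha> $ z"
  by (simp add: rr_simp)

lemma PP_neg: "q \<in> PP \<Longrightarrow> (\<lambda>x. - q x) \<in> PP"
  using PP_cmult[of q "-1"] by simp

lemma PP_comp: "q \<in> PP \<Longrightarrow> (\<lambda>x. q (root_refl \<alpha> x)) \<in> PP"
proof (induction q rule: PP.induct)
  case (pc c) then show ?case by (simp add: PP.pc)
next
  case (px q z)
  define Q where "Q = (\<lambda>x. q (root_refl \<alpha> x))"
  have QP: "Q \<in> PP" using px Q_def by simp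
  define c where "c = 2 / (\<alpha> \<bullet> \<alpha>)"
  have "(\<lambda>x. complex_of_real (x$z) * Q x + complex_of_real (\<alpha> \<bullet> x) * (complex_of_real (- c * \<alpha>$z) * Q x)) \<in> PP"
    by (intro PP.pa PP.px PP_inner PP_cmult QP)
  moreover have "complex_of_real (x$z) * Q x + complex_of_real (\<alpha> \<bullet> x) * (complex_of_real (- c * \<alpha>$z) * Q x)
     = complex_of_real (root_refl \<alpha> x $ z) * q (root_refl \<alpha> x)" for x
    by (simp add: Q_def c_def root_refl_def algebra_simps)
  ultimately show ?case by simp
next
  case (pa p q) then show ?case using PP.pa by auto
qed

lemma fd_comp: "q \<in> PP \<Longrightarrow> fd (\<lambda>x. q (root_refl \<alpha> x)) x h = fd q (root_refl \<alpha> x) (root_refl \<alpha> h)"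
proof -
  assume a: "q \<in> PP"
  have d: "(root_refl \<alpha> has_derivative root_refl \<alpha>) (at x)"
    by (rule bounded_linear_imp_has_derivative[OF rr_linear])
  have "fd (q \<circ> root_refl \<alpha>) x = fd q (root_refl \<alpha> x) \<circ> root_refl \<alpha>"
    by (rule fd_eq, rule diff_chain_at[OF d PP_diff[OF a]])
  then show ?thesis by (simp add: o_def)
qed

lemma fd_cmult: "q \<in> PP \<Longrightarrow> fd (\<lambda>x. c * q x) x h = c * fd q x h"
proof -
  assume a: "q \<in> PP"
  have "fd (\<lambda>x. c * q x) x = (\<lambda>h. c * fd q x h)"
    by (rule fd_eq, rule has_derivative_mult_right, rule PP_diff[OF a])
  then show ?thesis by simp
qed

lemma fd_linear_dir: "q \<in> PP \<Longrightarrow> linear (fd q x)"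
  using PP_diff has_derivative_linear by blast

lemma dd_xmult:
  assumes a: "\<alpha> \<bullet> \<alpha> = 2" and q: "q \<in> PP"
  shows "divdiff \<alpha> (\<lambda>y. complex_of_real (y$z) * q y) x
     = complex_of_real (\<alpha>$z) * q (root_refl \<alpha> x) + complex_of_real (x$z) * divdiff \<alpha> q x"
proof (cases "\<alpha> \<bullet> x = 0")
  case True
  then show ?thesis by (simp add: divdiff_def fd_xmult[OF q] rr_fix)
next
  case False
  then have ne: "complex_of_real (\<alpha> \<bullet> x) \<noteq> 0" by simp
  show ?thesis using False ne
    by (simp add: divdiff_def coord_rr[OF a] field_simps)
qed

lemma dd_add: "p \<in> PP \<Longrightarrow> q \<in> PP \<Longrightarrow> divdiff \<alpha> (\<lambda>y. p y + q y) x = divdiff \<alpha> p x + divdiff \<alpha> q x"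
  by (simp add: divdiff_def fd_add add_divide_distrib diff_divide_distrib)

lemma dd_cmult: "q \<in> PP \<Longrightarrow> divdiff \<alpha> (\<lambda>y. c * q y) x = c * divdiff \<alpha> q x"
  by (simp add: divdiff_def fd_cmult right_diff_distrib)

lemma dd_const: "divdiff \<alpha> (\<lambda>y. c) x = 0"
  by (simp add: divdiff_def fd_const)

lemma dd_comp:
  assumes a: "\<alpha> \<bullet> \<alpha> = 2" and b: "\<beta> \<bullet> \<beta> = 2" and q: "q \<in> PP"
  shows "divdiff \<alpha> (\<lambda>y. q (root_refl \<beta> y)) x = divdiff (root_refl \<beta> \<alpha>) q (root_refl \<beta> x)"
proof (cases "\<alpha> \<bullet> x = 0")
  case True
  then show ?thesis by (simp add: divdiff_def fd_comp[OF q] rr_inner[OF b])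
next
  case False
  then show ?thesis by (simp add: divdiff_def rr_inner[OF b] rr_conj[OF a b])
qed

lemma dd_neg:
  assumes q: "q \<in> PP"
  shows "divdiff (- \<alpha>) q x = - divdiff \<alpha> q x"
proof (cases "\<alpha> \<bullet> x = 0")
  case True
  have e: "fd q x (- \<alpha>) = - fd q x \<alpha>" using fd_linear_dir[OF q] by (rule linear_neg)
  have t2: "(- \<alpha>) \<bullet> x = 0" using True by simp
  have "divdiff (- \<alpha>) q x = fd q x (- \<alpha>)" unfolding divdiff_def by (rule if_P[OF t2])
  also have "\<dots> = - fd q x \<alpha>" by (rule e)
  also have "\<dots> = - divdiff \<alpha> q x" unfolding divdiff_def by (simp only: if_P[OF True])
  finally show ?thesis .
next
  case False
  then show ?thesis by (simp add: divdiff_def rr_neg)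
qed

lemma PP_dd: assumes a2: "\<alpha> \<bullet> \<alpha> = 2" shows "q \<in> PP \<Longrightarrow> divdiff \<alpha> q \<in> PP"
proof (induction q rule: PP.induct)
  case (pc c)
  have "divdiff \<alpha> (\<lambda>x. c) = (\<lambda>x. 0)" by (rule ext, rule dd_const)
  then show ?case using PP.pc by metis
next
  case (px q z)
  have e: "divdiff \<alpha> (\<lambda>y. complex_of_real (y$z) * q y) = (\<lambda>x. complex_of_real (\<alpha>$z) * q (root_refl \<alpha> x) + complex_of_real (x$z) * divdiff \<alpha> q x)"
    by (rule ext, rule dd_xmult[OF a2 px.hyps])
  show ?case unfolding e using px by (intro PP.pa PP.px PP_cmult PP_comp) auto
next
  case (pa p q)
  have e: "divdiff \<alpha> (\<lambda>y. p y + q y) = (\<lambda>x. divdiff \<alpha> p x + divdiff \<alpha> q x)"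
    by (rule ext, rule dd_add[OF pa.hyps])
  show ?case unfolding e using pa by (intro PP.pa) auto
qed



locale dsys =
  fixes R Rp :: "(real^'n) set" and \<kappa> :: "real^'n \<Rightarrow> complex"
  assumes finR: "finite R"
    and norm2: "\<alpha> \<in> R \<Longrightarrow> \<alpha> \<bullet> \<alpha> = 2"
    and reflR: "\<alpha> \<in> R \<Longrightarrow> \<beta> \<in> R \<Longrightarrow> root_refl \<alpha> \<beta> \<in> R"
    and Rp_sub: "Rp \<subseteq> R"
    and Rp_split: "\<alpha> \<in> R \<Longrightarrow> (\<alpha> \<in> Rp) = (- \<alpha> \<notin> Rp)"
    and kinv: "\<alpha> \<in> R \<Longrightarrow> \<beta> \<in> R \<Longrightarrow> \<kappa> (root_refl \<alpha> \<beta>) = \<kappa> \<beta>"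
begin

lemma finRp: "finite Rp" using finite_subset[OF Rp_sub finR] .

lemma negR: "\<alpha> \<in> R \<Longrightarrow> - \<alpha> \<in> R"
  using reflR[of \<alpha> \<alpha>] rr_self[OF norm2] by simp

lemma kneg: "\<alpha> \<in> R \<Longrightarrow> \<kappa> (- \<alpha>) = \<kappa> \<alpha>"
  using kinv[of \<alpha> \<alpha>] rr_self[OF norm2] by simp

lemma norm2p: "\<alpha> \<in> Rp \<Longrightarrow> \<alpha> \<bullet> \<alpha> = 2" using norm2 Rp_sub by auto

lemma reindex:
  assumes b: "\<beta> \<in> R" and ev: "\<And>\<gamma>. \<gamma> \<in> R \<Longrightarrow> \<phi> (- \<gamma>) = \<phi> \<gamma>"
  shows "(\<Sum>\<alpha>\<in>Rp. \<phi> (root_refl \<beta> \<alpha>)) = (\<Sum>\<alpha>\<in>Rp. \<phi> \<alpha>)"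
proof -
  define s where "s = (\<lambda>\<gamma>. if \<gamma> \<in> Rp then \<gamma> else - \<gamma>)"
  define g where "g = (\<lambda>\<alpha>. s (root_refl \<beta> \<alpha>))"
  have sR: "\<gamma> \<in> R \<Longrightarrow> s \<gamma> \<in> Rp" for \<gamma> using Rp_split[of \<gamma>] by (auto simp: s_def)
  have gR: "\<alpha> \<in> Rp \<Longrightarrow> g \<alpha> \<in> Rp" for \<alpha> unfolding g_def using sR reflR[OF b] Rp_sub by auto
  have phis: "\<gamma> \<in> R \<Longrightarrow> \<phi> (s \<gamma>) = \<phi> \<gamma>" for \<gamma> using ev by (auto simp: s_def)
  have rneg: "root_refl \<beta> (- a) = - root_refl \<beta> a" for a
    using rr_scale[of \<beta> "-1" a] by simp
  have inj: "inj_on g Rp"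
  proof (rule inj_onI)
    fix a a' assume a: "a \<in> Rp" "a' \<in> Rp" "g a = g a'"
    have "root_refl \<beta> a = root_refl \<beta> a' \<or> root_refl \<beta> a = - root_refl \<beta> a'"
      using a(3) unfolding g_def s_def by (auto split: if_splits simp: minus_equation_iff)
    then have "root_refl \<beta> (root_refl \<beta> a) = root_refl \<beta> (root_refl \<beta> a') \<or>
               root_refl \<beta> (root_refl \<beta> a) = root_refl \<beta> (- root_refl \<beta> a')" by auto
    then have "a = a' \<or> a = - a'" unfolding rneg rr_invol[OF norm2[OF b]] .
    moreover have "a \<noteq> - a'" using a Rp_split[of a'] Rp_sub by auto
    ultimately show "a = a'" by blast
  qed
  have img: "g ` Rp = Rp"
    by (rule endo_inj_surj[OF finRp _ inj]) (use gR in auto)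
  have "(\<Sum>\<alpha>\<in>Rp. \<phi> \<alpha>) = (\<Sum>\<alpha>\<in>g ` Rp. \<phi> \<alpha>)" by (simp only: img)
  also have "\<dots> = (\<Sum>\<alpha>\<in>Rp. \<phi> (g \<alpha>))" by (rule sum.reindex[OF inj, unfolded o_def])
  also have "\<dots> = (\<Sum>\<alpha>\<in>Rp. \<phi> (root_refl \<beta> \<alpha>))"
    by (rule sum.cong[OF refl]) (use phis reflR[OF b] Rp_sub in \<open>auto simp: g_def\<close>)
  finally show ?thesis by simp
qed

definition dk :: "real^'n \<Rightarrow> (real^'n \<Rightarrow> complex) \<Rightarrow> real^'n \<Rightarrow> complex" where
  "dk \<xi> f x = fd f x \<xi> + (\<Sum>\<alpha>\<in>Rp. \<kappa> \<alpha> * complex_of_real (\<alpha> \<bullet> \<xi>) * divdiff \<alpha> f x)"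

lemma PP_dk: "q \<in> PP \<Longrightarrow> dk \<xi> q \<in> PP"
proof -
  assume q: "q \<in> PP"
  have "(\<lambda>x. fd q x \<xi> + (\<Sum>\<alpha>\<in>Rp. \<kappa> \<alpha> * complex_of_real (\<alpha> \<bullet> \<xi>) * divdiff \<alpha> q x)) \<in> PP"
    by (intro PP.pa PP_fd[OF q] PP_sum PP_cmult PP_dd[OF norm2p q])
  then show ?thesis unfolding dk_def[abs_def] .
qed

lemma dk_add: "p \<in> PP \<Longrightarrow> q \<in> PP \<Longrightarrow> dk \<xi> (\<lambda>y. p y + q y) x = dk \<xi> p x + dk \<xi> q x"
  by (simp add: dk_def fd_add dd_add distrib_left sum.distrib)

lemma dk_cmult: "q \<in> PP \<Longrightarrow> dk \<xi> (\<lambda>y. c * q y) x = c * dk \<xi> q x"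
  by (simp add: dk_def fd_cmult dd_cmult distrib_left sum_distrib_left mult.left_commute)

lemma dk_const: "dk \<xi> (\<lambda>y. c) x = 0"
  by (simp add: dk_def fd_const dd_const)

lemma dk_sum: "(\<And>i. i \<in> S \<Longrightarrow> f i \<in> PP) \<Longrightarrow> dk \<xi> (\<lambda>y. \<Sum>i\<in>S. f i y) x = (\<Sum>i\<in>S. dk \<xi> (f i) x)"
proof (cases "finite S")
  case True
  assume "\<And>i. i \<in> S \<Longrightarrow> f i \<in> PP"
  with True show ?thesis
  proof (induction S rule: finite_induct)
    case empty then show ?case using dk_const[of \<xi> 0 x] by simp
  next
    case (insert a S)
    have "dk \<xi> (\<lambda>y. \<Sum>i\<in>insert a S. f i y) x = dk \<xi> (\<lambda>y. f a y + (\<Sum>i\<in>S. f i y)) x"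
      using insert.hyps by simp
    also have "\<dots> = dk \<xi> (f a) x + dk \<xi> (\<lambda>y. \<Sum>i\<in>S. f i y) x"
      by (rule dk_add) (use insert.prems in \<open>auto intro!: PP_sum\<close>)
    finally show ?case using insert by simp
  qed
next
  case False then show ?thesis using dk_const[of \<xi> 0 x] by simp
qed

lemma dk_xmult: "q \<in> PP \<Longrightarrow> dk \<xi> (\<lambda>y. complex_of_real (y$z) * q y) x
   = complex_of_real (x$z) * dk \<xi> q x + complex_of_real (\<xi>$z) * q x
     + (\<Sum>\<alpha>\<in>Rp. \<kappa> \<alpha> * complex_of_real (\<alpha> \<bullet> \<xi>) * complex_of_real (\<alpha>$z) * q (root_refl \<alpha> x))"
proof -
  assume q: "q \<in> PP"
  have hv: "(\<Sum>\<alpha>\<in>Rp. \<kappa> \<alpha> * complex_of_real (\<alpha> \<bullet> \<xi>) * divdiff \<alpha> (\<lambda>y. complex_of_real (y$z) * q y) x)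
     = (\<Sum>\<alpha>\<in>Rp. \<kappa> \<alpha> * complex_of_real (\<alpha> \<bullet> \<xi>) * complex_of_real (\<alpha>$z) * q (root_refl \<alpha> x))
       + complex_of_real (x$z) * (\<Sum>\<alpha>\<in>Rp. \<kappa> \<alpha> * complex_of_real (\<alpha> \<bullet> \<xi>) * divdiff \<alpha> q x)"
  proof -
    have "(\<Sum>\<alpha>\<in>Rp. \<kappa> \<alpha> * complex_of_real (\<alpha> \<bullet> \<xi>) * divdiff \<alpha> (\<lambda>y. complex_of_real (y$z) * q y) x)
      = (\<Sum>\<alpha>\<in>Rp. \<kappa> \<alpha> * complex_of_real (\<alpha> \<bullet> \<xi>) * (complex_of_real (\<alpha>$z) * q (root_refl \<alpha> x) + complex_of_real (x$z) * divdiff \<alpha> q x))"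
      by (rule sum.cong[OF refl]) (simp only: dd_xmult[OF norm2p q])
    then show ?thesis by (simp add: sum_distrib_left sum.distrib algebra_simps)
  qed
  show ?thesis unfolding dk_def fd_xmult[OF q] hv by (simp add: algebra_simps)
qed

lemma dk_dirlin: "q \<in> PP \<Longrightarrow> dk (a *\<^sub>R \<xi> + b *\<^sub>R \<eta>) q x = complex_of_real a * dk \<xi> q x + complex_of_real b * dk \<eta> q x"
proof -
  assume q: "q \<in> PP"
  have l: "linear (fd q x)" by (rule fd_linear_dir[OF q])
  have f: "fd q x (a *\<^sub>R \<xi> + b *\<^sub>R \<eta>) = complex_of_real a * fd q x \<xi> + complex_of_real b * fd q x \<eta>"
  proof -
    have "fd q x (a *\<^sub>R \<xi> + b *\<^sub>R \<eta>) = a *\<^sub>R fd q x \<xi> + b *\<^sub>R fd q x \<eta>"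
      by (simp only: linear_add[OF l] linear_scale[OF l])
    then show ?thesis by (simp add: scaleR_conv_of_real)
  qed
  show ?thesis unfolding dk_def f
    by (simp add: inner_add_right sum_distrib_left sum.distrib algebra_simps)
qed

lemma dk_diffscale: "q \<in> PP \<Longrightarrow> dk (\<xi> - c *\<^sub>R \<eta>) q x = dk \<xi> q x - complex_of_real c * dk \<eta> q x"
  using dk_dirlin[of q 1 \<xi> "-c" \<eta> x] by simp

lemma dk_neg: "q \<in> PP \<Longrightarrow> dk (- \<eta>) q x = - dk \<eta> q x"
  using dk_dirlin[of q 0 \<eta> "-1" \<eta> x] by simp

lemma dk_expand: "q \<in> PP \<Longrightarrow> dk \<xi> q x = (\<Sum>j\<in>UNIV. complex_of_real (\<xi>$j) * dk (axis j 1) q x)"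
proof -
  assume q: "q \<in> PP"
  have l: "linear (fd q x)" by (rule fd_linear_dir[OF q])
  have xi: "\<xi> = (\<Sum>j\<in>UNIV. (\<xi>$j) *\<^sub>R axis j 1)"
    using basis_expansion[of \<xi>] by (simp add: scalar_mult_eq_scaleR)
  have f: "fd q x \<xi> = (\<Sum>j\<in>UNIV. complex_of_real (\<xi>$j) * fd q x (axis j 1))"
  proof -
    have "fd q x \<xi> = (\<Sum>j\<in>UNIV. (\<xi>$j) *\<^sub>R fd q x (axis j 1))"
      by (subst xi) (simp only: linear_sum[OF l] linear_scale[OF l])
    then show ?thesis by (simp add: scaleR_conv_of_real)
  qed
  have i: "\<alpha> \<bullet> \<xi> = (\<Sum>j\<in>UNIV. \<xi>$j * (\<alpha> \<bullet> axis j 1))" for \<alpha>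
    by (simp only: inner_axis inner_real_def mult_1_right) (simp add: inner_vec_def mult.commute)
  show ?thesis unfolding dk_def f i
    by (simp add: sum_distrib_left sum_distrib_right sum.distrib algebra_simps sum.swap[of _ UNIV Rp])
qed

lemma dk_comp:
  assumes b: "\<beta> \<in> R" and q: "q \<in> PP"
  shows "dk \<xi> (\<lambda>y. q (root_refl \<beta> y)) x = dk (root_refl \<beta> \<xi>) q (root_refl \<beta> x)"
proof -
  define \<phi> where "\<phi> = (\<lambda>\<gamma>. \<kappa> \<gamma> * complex_of_real (\<gamma> \<bullet> root_refl \<beta> \<xi>) * divdiff \<gamma> q (root_refl \<beta> x))"
  have "(\<Sum>\<alpha>\<in>Rp. \<kappa> \<alpha> * complex_of_real (\<alpha> \<bullet> \<xi>) * divdiff \<alpha> (\<lambda>y. q (root_refl \<beta> y)) x)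
      = (\<Sum>\<alpha>\<in>Rp. \<phi> (root_refl \<beta> \<alpha>))"
  proof (rule sum.cong[OF refl])
    fix \<alpha> assume a: "\<alpha> \<in> Rp"
    then have aR: "\<alpha> \<in> R" using Rp_sub by auto
    show "\<kappa> \<alpha> * complex_of_real (\<alpha> \<bullet> \<xi>) * divdiff \<alpha> (\<lambda>y. q (root_refl \<beta> y)) x = \<phi> (root_refl \<beta> \<alpha>)"
      unfolding \<phi>_def dd_comp[OF norm2[OF aR] norm2[OF b] q] rr_inner[OF norm2[OF b]] kinv[OF b aR] ..
  qed
  also have "\<dots> = (\<Sum>\<alpha>\<in>Rp. \<phi> \<alpha>)"
  proof (rule reindex[OF b])
    fix \<gamma> assume "\<gamma> \<in> R"
    then show "\<phi> (- \<gamma>) = \<phi> \<gamma>" unfolding \<phi>_def by (simp add: kneg dd_neg[OF q])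
  qed
  finally have s: "(\<Sum>\<alpha>\<in>Rp. \<kappa> \<alpha> * complex_of_real (\<alpha> \<bullet> \<xi>) * divdiff \<alpha> (\<lambda>y. q (root_refl \<beta> y)) x)
      = (\<Sum>\<alpha>\<in>Rp. \<phi> \<alpha>)" .
  show ?thesis unfolding dk_def fd_comp[OF q] s \<phi>_def ..
qed

end


context dsys begin

lemma dk_xmult_fun: "q \<in> PP \<Longrightarrow> dk \<eta> (\<lambda>y. complex_of_real (y$z) * q y)
   = (\<lambda>y. (complex_of_real (y$z) * dk \<eta> q y + complex_of_real (\<eta>$z) * q y)
     + (\<Sum>\<alpha>\<in>Rp. \<kappa> \<alpha> * complex_of_real (\<alpha> \<bullet> \<eta>) * complex_of_real (\<alpha>$z) * q (root_refl \<alpha> y)))"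
  by (rule ext) (rule dk_xmult)

lemma dk_reflsum:
  assumes q: "q \<in> PP"
  shows "dk \<xi> (\<lambda>y. \<Sum>\<alpha>\<in>Rp. c \<alpha> * q (root_refl \<alpha> y)) x
     = (\<Sum>\<alpha>\<in>Rp. c \<alpha> * (dk \<xi> q (root_refl \<alpha> x) - complex_of_real (\<alpha> \<bullet> \<xi>) * dk \<alpha> q (root_refl \<alpha> x)))"
proof -
  have "dk \<xi> (\<lambda>y. \<Sum>\<alpha>\<in>Rp. c \<alpha> * q (root_refl \<alpha> y)) x = (\<Sum>\<alpha>\<in>Rp. dk \<xi> (\<lambda>y. c \<alpha> * q (root_refl \<alpha> y)) x)"
    by (rule dk_sum) (intro PP_cmult PP_comp q)
  also have "\<dots> = (\<Sum>\<alpha>\<in>Rp. c \<alpha> * (dk \<xi> q (root_refl \<alpha> x) - complex_of_real (\<alpha> \<bullet> \<xi>) * dk \<alpha> q (root_refl \<alpha> x)))"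
  proof (rule sum.cong[OF refl])
    fix \<alpha> assume a: "\<alpha> \<in> Rp"
    then have aR: "\<alpha> \<in> R" using Rp_sub by auto
    have "dk \<xi> (\<lambda>y. c \<alpha> * q (root_refl \<alpha> y)) x = c \<alpha> * dk \<xi> (\<lambda>y. q (root_refl \<alpha> y)) x"
      by (rule dk_cmult[OF PP_comp[OF q]])
    also have "\<dots> = c \<alpha> * dk (root_refl \<alpha> \<xi>) q (root_refl \<alpha> x)"
      by (simp only: dk_comp[OF aR q])
    also have "\<dots> = c \<alpha> * (dk \<xi> q (root_refl \<alpha> x) - complex_of_real (\<alpha> \<bullet> \<xi>) * dk \<alpha> q (root_refl \<alpha> x))"
      by (simp only: rr_simp[OF norm2[OF aR]] dk_diffscale[OF q])
    finally show "dk \<xi> (\<lambda>y. c \<alpha> * q (root_refl \<alpha> y)) x = c \<alpha> * (dk \<xi> q (root_refl \<alpha> x) - complex_of_real (\<alpha> \<bullet> \<xi>) * dk \<alpha> q (root_refl \<alpha> x))" .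
  qed
  finally show ?thesis .
qed

lemma dk_dk_x:
  assumes q: "q \<in> PP"
  shows "dk \<xi> (dk \<eta> (\<lambda>y. complex_of_real (y$z) * q y)) x
    = complex_of_real (x$z) * dk \<xi> (dk \<eta> q) x + complex_of_real (\<xi>$z) * dk \<eta> q x
      + (\<Sum>\<alpha>\<in>Rp. \<kappa> \<alpha> * complex_of_real (\<alpha> \<bullet> \<xi>) * complex_of_real (\<alpha>$z) * dk \<eta> q (root_refl \<alpha> x))
      + complex_of_real (\<eta>$z) * dk \<xi> q x
      + (\<Sum>\<alpha>\<in>Rp. \<kappa> \<alpha> * complex_of_real (\<alpha> \<bullet> \<eta>) * complex_of_real (\<alpha>$z) *
           (dk \<xi> q (root_refl \<alpha> x) - complex_of_real (\<alpha> \<bullet> \<xi>) * dk \<alpha> q (root_refl \<alpha> x)))"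
proof -
  have Pe: "dk \<eta> q \<in> PP" by (rule PP_dk[OF q])
  have PA: "(\<lambda>y. complex_of_real (y$z) * dk \<eta> q y) \<in> PP" by (rule PP.px[OF Pe])
  have PB: "(\<lambda>y. complex_of_real (\<eta>$z) * q y) \<in> PP" by (rule PP_cmult[OF q])
  have PC: "(\<lambda>y. \<Sum>\<alpha>\<in>Rp. \<kappa> \<alpha> * complex_of_real (\<alpha> \<bullet> \<eta>) * complex_of_real (\<alpha>$z) * q (root_refl \<alpha> y)) \<in> PP"
    by (intro PP_sum PP_cmult PP_comp q)
  have "dk \<xi> (dk \<eta> (\<lambda>y. complex_of_real (y$z) * q y)) x
     = dk \<xi> (\<lambda>y. (complex_of_real (y$z) * dk \<eta> q y + complex_of_real (\<eta>$z) * q y)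
     + (\<Sum>\<alpha>\<in>Rp. \<kappa> \<alpha> * complex_of_real (\<alpha> \<bullet> \<eta>) * complex_of_real (\<alpha>$z) * q (root_refl \<alpha> y))) x"
    by (simp only: dk_xmult_fun[OF q])
  also have "\<dots> = (dk \<xi> (\<lambda>y. complex_of_real (y$z) * dk \<eta> q y) x + dk \<xi> (\<lambda>y. complex_of_real (\<eta>$z) * q y) x)
     + dk \<xi> (\<lambda>y. \<Sum>\<alpha>\<in>Rp. \<kappa> \<alpha> * complex_of_real (\<alpha> \<bullet> \<eta>) * complex_of_real (\<alpha>$z) * q (root_refl \<alpha> y)) x"
    using dk_add[OF PP.pa[OF PA PB] PC] dk_add[OF PA PB] by simp
  also have "\<dots> = ((complex_of_real (x$z) * dk \<xi> (dk \<eta> q) x + complex_of_real (\<xi>$z) * dk \<eta> q x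
      + (\<Sum>\<alpha>\<in>Rp. \<kappa> \<alpha> * complex_of_real (\<alpha> \<bullet> \<xi>) * complex_of_real (\<alpha>$z) * dk \<eta> q (root_refl \<alpha> x)))
      + complex_of_real (\<eta>$z) * dk \<xi> q x)
      + (\<Sum>\<alpha>\<in>Rp. \<kappa> \<alpha> * complex_of_real (\<alpha> \<bullet> \<eta>) * complex_of_real (\<alpha>$z) *
           (dk \<xi> q (root_refl \<alpha> x) - complex_of_real (\<alpha> \<bullet> \<xi>) * dk \<alpha> q (root_refl \<alpha> x)))"
    by (simp only: dk_xmult[OF Pe] dk_cmult[OF q] dk_reflsum[OF q])
  finally show ?thesis by (simp only: add.assoc)
qed

lemma dk_comm: "q \<in> PP \<Longrightarrow> \<forall>\<xi> \<eta> x. dk \<xi> (dk \<eta> q) x = dk \<eta> (dk \<xi> q) x"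
proof (induction q rule: PP.induct)
  case (pc c)
  have "dk \<eta> (\<lambda>x. c) = (\<lambda>x. 0)" for \<eta> by (rule ext, rule dk_const)
  then show ?case by (simp add: dk_const)
next
  case (px q z)
  show ?case
  proof (intro allI)
    fix \<xi> \<eta> x
    show "dk \<xi> (dk \<eta> (\<lambda>y. complex_of_real (y$z) * q y)) x = dk \<eta> (dk \<xi> (\<lambda>y. complex_of_real (y$z) * q y)) x"
      unfolding dk_dk_x[OF px.hyps] using px.IH
      by (simp add: algebra_simps sum.distrib sum_subtractf sum_distrib_left)
  qed
next
  case (pa p q)
  show ?case
  proof (intro allI)
    fix \<xi> \<eta> x
    have e: "dk \<eta> (\<lambda>y. p y + q y) = (\<lambda>y. dk \<eta> p y + dk \<eta> q y)" for \<eta>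
      by (rule ext, rule dk_add[OF pa.hyps])
    show "dk \<xi> (dk \<eta> (\<lambda>y. p y + q y)) x = dk \<eta> (dk \<xi> (\<lambda>y. p y + q y)) x"
      unfolding e dk_add[OF PP_dk[OF pa.hyps(1)] PP_dk[OF pa.hyps(2)]] using pa.IH by simp
  qed
qed

end


context dsys begin

definition lap :: "(real^'n \<Rightarrow> complex) \<Rightarrow> real^'n \<Rightarrow> complex" where
  "lap q x = (\<Sum>j\<in>UNIV. dk (axis j 1) (dk (axis j 1) q) x)"

definition eul :: "(real^'n \<Rightarrow> complex) \<Rightarrow> real^'n \<Rightarrow> complex" where
  "eul q x = (\<Sum>j\<in>UNIV. complex_of_real (x$j) * fd q x (axis j 1))"

lemma eul_fd: "q \<in> PP \<Longrightarrow> eul q x = fd q x x"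
proof -
  assume q: "q \<in> PP"
  have l: "linear (fd q x)" by (rule fd_linear_dir[OF q])
  have xi: "x = (\<Sum>j\<in>UNIV. (x$j) *\<^sub>R axis j 1)"
    using basis_expansion[of x] by (simp add: scalar_mult_eq_scaleR)
  have "fd q x x = (\<Sum>j\<in>UNIV. (x$j) *\<^sub>R fd q x (axis j 1))"
    by (subst (2) xi) (simp only: linear_sum[OF l] linear_scale[OF l])
  then show ?thesis by (simp add: eul_def scaleR_conv_of_real)
qed

lemma PP_eul: "q \<in> PP \<Longrightarrow> eul q \<in> PP"
  unfolding eul_def[abs_def] by (intro PP_sum PP.px PP_fd)

lemma PP_lap: "q \<in> PP \<Longrightarrow> lap q \<in> PP"
  unfolding lap_def[abs_def] by (intro PP_sum PP_dk)

lemma eul_add: "p \<in> PP \<Longrightarrow> q \<in> PP \<Longrightarrow> eul (\<lambda>y. p y + q y) x = eul p x + eul q x"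
  by (simp add: eul_fd PP.pa fd_add)

lemma eul_cmult: "q \<in> PP \<Longrightarrow> eul (\<lambda>y. c * q y) x = c * eul q x"
  by (simp add: eul_fd PP_cmult fd_cmult)

lemma eul_const: "eul (\<lambda>y. c) x = 0"
  by (simp add: eul_def fd_const)

lemma eul_x: "q \<in> PP \<Longrightarrow> eul (\<lambda>y. complex_of_real (y$z) * q y) x = complex_of_real (x$z) * q x + complex_of_real (x$z) * eul q x"
  by (simp add: eul_fd PP.px fd_xmult)

lemma eul_comp: "q \<in> PP \<Longrightarrow> eul (\<lambda>y. q (root_refl \<alpha> y)) x = eul q (root_refl \<alpha> x)"
  by (simp add: eul_fd PP_comp fd_comp)

lemma eul_sum: "(\<And>i. i \<in> S \<Longrightarrow> f i \<in> PP) \<Longrightarrow> eul (\<lambda>y. \<Sum>i\<in>S. f i y) x = (\<Sum>i\<in>S. eul (f i) x)"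
proof (cases "finite S")
  case True
  assume "\<And>i. i \<in> S \<Longrightarrow> f i \<in> PP"
  with True show ?thesis
  proof (induction S rule: finite_induct)
    case empty then show ?case using eul_const[of 0 x] by simp
  next
    case (insert a S)
    have "eul (\<lambda>y. \<Sum>i\<in>insert a S. f i y) x = eul (\<lambda>y. f a y + (\<Sum>i\<in>S. f i y)) x"
      using insert.hyps by simp
    also have "\<dots> = eul (f a) x + eul (\<lambda>y. \<Sum>i\<in>S. f i y) x"
      by (rule eul_add) (use insert.prems in \<open>auto intro!: PP_sum\<close>)
    finally show ?case using insert by simp
  qed
next
  case False then show ?thesis using eul_const[of 0 x] by simp
qed

lemma lap_add: "p \<in> PP \<Longrightarrow> q \<in> PP \<Longrightarrow> lap (\<lambda>y. p y + q y) x = lap p x + lap q x"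
proof -
  assume p: "p \<in> PP" and q: "q \<in> PP"
  have e: "dk \<xi> (\<lambda>y. p y + q y) = (\<lambda>y. dk \<xi> p y + dk \<xi> q y)" for \<xi>
    by (rule ext, rule dk_add[OF p q])
  show ?thesis unfolding lap_def e dk_add[OF PP_dk[OF p] PP_dk[OF q]] by (simp add: sum.distrib)
qed

lemma lap_cmult: "q \<in> PP \<Longrightarrow> lap (\<lambda>y. c * q y) x = c * lap q x"
proof -
  assume q: "q \<in> PP"
  have e: "dk \<xi> (\<lambda>y. c * q y) = (\<lambda>y. c * dk \<xi> q y)" for \<xi>
    by (rule ext, rule dk_cmult[OF q])
  show ?thesis unfolding lap_def e dk_cmult[OF PP_dk[OF q]] by (simp add: sum_distrib_left)
qed

lemma lap_dk: "q \<in> PP \<Longrightarrow> lap (dk \<xi> q) x = dk \<xi> (lap q) x"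
proof -
  assume q: "q \<in> PP"
  have c1: "dk (axis j 1) (dk \<xi> q) = dk \<xi> (dk (axis j 1) q)" for j
    using dk_comm[OF q] by blast
  have c2: "dk (axis j 1) (dk \<xi> (dk (axis j 1) q)) x = dk \<xi> (dk (axis j 1) (dk (axis j 1) q)) x" for j
    using dk_comm[OF PP_dk[OF q]] by blast
  have "lap (dk \<xi> q) x = (\<Sum>j\<in>UNIV. dk \<xi> (dk (axis j 1) (dk (axis j 1) q)) x)"
    unfolding lap_def c1 c2 ..
  also have "\<dots> = dk \<xi> (lap q) x"
    unfolding lap_def[abs_def] by (rule dk_sum[symmetric]) (intro PP_dk q)
  finally show ?thesis .
qed

end


context dsys begin

lemma lap_x:
  assumes q: "q \<in> PP"
  shows "lap (\<lambda>y. complex_of_real (y$i) * q y) x = complex_of_real (x$i) * lap q x + 2 * dk (axis i 1) q x"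
proof -
  define D where "D = (\<lambda>j. dk (axis j 1) q)"
  have T: "dk (axis j 1) (dk (axis j 1) (\<lambda>y. complex_of_real (y$i) * q y)) x
     = complex_of_real (x$i) * dk (axis j 1) (D j) x + 2 * complex_of_real (axis j 1 $ i) * D j x
       + (\<Sum>\<alpha>\<in>Rp. \<kappa> \<alpha> * complex_of_real (\<alpha>$i) * (2 * complex_of_real (\<alpha>$j) * D j (root_refl \<alpha> x)
            - complex_of_real (\<alpha>$j) * complex_of_real (\<alpha>$j) * dk \<alpha> q (root_refl \<alpha> x)))" for j
    unfolding dk_dk_x[OF q] D_def
    by (simp add: inner_axis sum.distrib[symmetric] sum_subtractf[symmetric] algebra_simps)
  have S1: "(\<Sum>j\<in>UNIV. 2 * complex_of_real (axis j 1 $ i) * D j x) = 2 * D i x"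
    by (simp add: axis_def if_distrib if_distribR cong: if_cong)
  have S2: "(\<Sum>j\<in>UNIV. complex_of_real (\<alpha>$j) * D j y) = dk \<alpha> q y" for \<alpha> y
    unfolding D_def using dk_expand[OF q, of \<alpha> y] by simp
  have S3: "\<alpha> \<in> Rp \<Longrightarrow> (\<Sum>j\<in>UNIV. complex_of_real (\<alpha>$j) * complex_of_real (\<alpha>$j)) = 2" for \<alpha>
  proof -
    assume a: "\<alpha> \<in> Rp"
    have "(\<Sum>j\<in>UNIV. (\<alpha>$j) * (\<alpha>$j)) = 2" using norm2p[OF a] by (simp add: inner_vec_def)
    then have "complex_of_real (\<Sum>j\<in>UNIV. (\<alpha>$j) * (\<alpha>$j)) = 2" by simp
    then show ?thesis by simp
  qed
  have Z: "(\<Sum>j\<in>UNIV. \<Sum>\<alpha>\<in>Rp. \<kappa> \<alpha> * complex_of_real (\<alpha>$i) * (2 * complex_of_real (\<alpha>$j) * D j (root_refl \<alpha> x)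
            - complex_of_real (\<alpha>$j) * complex_of_real (\<alpha>$j) * dk \<alpha> q (root_refl \<alpha> x))) = 0"
  proof -
    have "(\<Sum>j\<in>UNIV. \<Sum>\<alpha>\<in>Rp. \<kappa> \<alpha> * complex_of_real (\<alpha>$i) * (2 * complex_of_real (\<alpha>$j) * D j (root_refl \<alpha> x)
            - complex_of_real (\<alpha>$j) * complex_of_real (\<alpha>$j) * dk \<alpha> q (root_refl \<alpha> x)))
       = (\<Sum>\<alpha>\<in>Rp. \<kappa> \<alpha> * complex_of_real (\<alpha>$i) * (2 * (\<Sum>j\<in>UNIV. complex_of_real (\<alpha>$j) * D j (root_refl \<alpha> x))
            - (\<Sum>j\<in>UNIV. complex_of_real (\<alpha>$j) * complex_of_real (\<alpha>$j)) * dk \<alpha> q (root_refl \<alpha> x)))"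
      by (subst sum.swap) (simp add: sum_distrib_left sum_distrib_right sum_subtractf algebra_simps)
    also have "\<dots> = 0" by (simp add: S2 S3 cong: sum.cong)
    finally show ?thesis .
  qed
  have "lap (\<lambda>y. complex_of_real (y$i) * q y) x
     = (\<Sum>j\<in>UNIV. complex_of_real (x$i) * dk (axis j 1) (D j) x) + (\<Sum>j\<in>UNIV. 2 * complex_of_real (axis j 1 $ i) * D j x)
       + (\<Sum>j\<in>UNIV. \<Sum>\<alpha>\<in>Rp. \<kappa> \<alpha> * complex_of_real (\<alpha>$i) * (2 * complex_of_real (\<alpha>$j) * D j (root_refl \<alpha> x)
            - complex_of_real (\<alpha>$j) * complex_of_real (\<alpha>$j) * dk \<alpha> q (root_refl \<alpha> x)))"
    unfolding lap_def T by (simp only: sum.distrib)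
  also have "\<dots> = complex_of_real (x$i) * lap q x + 2 * dk (axis i 1) q x"
    unfolding S1 Z by (simp add: lap_def D_def sum_distrib_left)
  finally show ?thesis .
qed

end


context dsys begin

lemma eul_dk: "q \<in> PP \<Longrightarrow> \<forall>\<xi> x. eul (dk \<xi> q) x = dk \<xi> (eul q) x - dk \<xi> q x"
proof (induction q rule: PP.induct)
  case (pc c)
  have e1: "dk \<xi> (\<lambda>x. c) = (\<lambda>x. 0)" for \<xi> by (rule ext, rule dk_const)
  have e2: "eul (\<lambda>x. c) = (\<lambda>x. 0)" by (rule ext, rule eul_const)
  show ?case unfolding e1 e2 by (simp add: eul_const dk_const)
next
  case (px q z)
  show ?case
  proof (intro allI)
    fix \<xi> x
    define c where "c = (\<lambda>\<alpha>. \<kappa> \<alpha> * complex_of_real (\<alpha> \<bullet> \<xi>) * complex_of_real (\<alpha>$z))"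
    have Pd: "dk \<xi> q \<in> PP" by (rule PP_dk[OF px.hyps])
    have Pe: "eul q \<in> PP" by (rule PP_eul[OF px.hyps])
    have PA: "(\<lambda>y. complex_of_real (y$z) * dk \<xi> q y) \<in> PP" by (rule PP.px[OF Pd])
    have PB: "(\<lambda>y. complex_of_real (\<xi>$z) * q y) \<in> PP" by (rule PP_cmult[OF px.hyps])
    have PC: "(\<lambda>y. \<Sum>\<alpha>\<in>Rp. c \<alpha> * q (root_refl \<alpha> y)) \<in> PP"
      by (intro PP_sum PP_cmult PP_comp px.hyps)
    have f1: "dk \<xi> (\<lambda>y. complex_of_real (y$z) * q y) = (\<lambda>y. (complex_of_real (y$z) * dk \<xi> q y + complex_of_real (\<xi>$z) * q y)
        + (\<Sum>\<alpha>\<in>Rp. c \<alpha> * q (root_refl \<alpha> y)))"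
      unfolding c_def by (rule dk_xmult_fun[OF px.hyps])
    have "eul (dk \<xi> (\<lambda>y. complex_of_real (y$z) * q y)) x
      = (eul (\<lambda>y. complex_of_real (y$z) * dk \<xi> q y) x + eul (\<lambda>y. complex_of_real (\<xi>$z) * q y) x)
        + eul (\<lambda>y. \<Sum>\<alpha>\<in>Rp. c \<alpha> * q (root_refl \<alpha> y)) x"
      unfolding f1 using eul_add[OF PP.pa[OF PA PB] PC] eul_add[OF PA PB] by simp
    also have "\<dots> = (complex_of_real (x$z) * dk \<xi> q x + complex_of_real (x$z) * eul (dk \<xi> q) x
        + complex_of_real (\<xi>$z) * eul q x) + (\<Sum>\<alpha>\<in>Rp. c \<alpha> * eul q (root_refl \<alpha> x))"
      by (simp only: eul_x[OF Pd] eul_cmult[OF px.hyps] eul_sum[OF PP_cmult[OF PP_comp[OF px.hyps]]]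
          eul_cmult[OF PP_comp[OF px.hyps]] eul_comp[OF px.hyps])
    finally have L: "eul (dk \<xi> (\<lambda>y. complex_of_real (y$z) * q y)) x
      = complex_of_real (x$z) * dk \<xi> (eul q) x + complex_of_real (\<xi>$z) * eul q x + (\<Sum>\<alpha>\<in>Rp. c \<alpha> * eul q (root_refl \<alpha> x))"
      using px.IH by (simp add: algebra_simps)
    have Pqe: "(\<lambda>y. q y + eul q y) \<in> PP" by (rule PP.pa[OF px.hyps Pe])
    have f2: "eul (\<lambda>y. complex_of_real (y$z) * q y) = (\<lambda>y. complex_of_real (y$z) * (q y + eul q y))"
      by (rule ext) (simp add: eul_x[OF px.hyps] distrib_left)
    have R: "dk \<xi> (eul (\<lambda>y. complex_of_real (y$z) * q y)) x
       = complex_of_real (x$z) * (dk \<xi> q x + dk \<xi> (eul q) x) + complex_of_real (\<xi>$z) * (q x + eul q x)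
         + (\<Sum>\<alpha>\<in>Rp. c \<alpha> * (q (root_refl \<alpha> x) + eul q (root_refl \<alpha> x)))"
      unfolding f2 dk_xmult[OF Pqe] dk_add[OF px.hyps Pe] c_def ..
    have R2: "dk \<xi> (\<lambda>y. complex_of_real (y$z) * q y) x = (complex_of_real (x$z) * dk \<xi> q x + complex_of_real (\<xi>$z) * q x)
        + (\<Sum>\<alpha>\<in>Rp. c \<alpha> * q (root_refl \<alpha> x))"
      unfolding f1 ..
    show "eul (dk \<xi> (\<lambda>y. complex_of_real (y$z) * q y)) x =
        dk \<xi> (eul (\<lambda>y. complex_of_real (y$z) * q y)) x - dk \<xi> (\<lambda>y. complex_of_real (y$z) * q y) x"
      unfolding L R R2 by (simp add: algebra_simps sum.distrib)
  qed
next
  case (pa p q)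
  show ?case
  proof (intro allI)
    fix \<xi> x
    have e: "dk \<xi> (\<lambda>y. p y + q y) = (\<lambda>y. dk \<xi> p y + dk \<xi> q y)"
      by (rule ext, rule dk_add[OF pa.hyps])
    have e2: "eul (\<lambda>y. p y + q y) = (\<lambda>y. eul p y + eul q y)"
      by (rule ext, rule eul_add[OF pa.hyps])
    show "eul (dk \<xi> (\<lambda>y. p y + q y)) x = dk \<xi> (eul (\<lambda>y. p y + q y)) x - dk \<xi> (\<lambda>y. p y + q y) x"
      unfolding e e2 eul_add[OF PP_dk[OF pa.hyps(1)] PP_dk[OF pa.hyps(2)]]
        dk_add[OF PP_eul[OF pa.hyps(1)] PP_eul[OF pa.hyps(2)]]
      using pa.IH by simp
  qed
qed

end


context dsys begin

definition Lop :: "(real^'n \<Rightarrow> complex) \<Rightarrow> real^'n \<Rightarrow> complex" where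
  "Lop q x = lap q x - 2 * eul q x"

definition Rs :: "'n \<Rightarrow> (real^'n \<Rightarrow> complex) \<Rightarrow> real^'n \<Rightarrow> complex" where
  "Rs i q = (\<lambda>y. (-1) * dk (axis i 1) q y + 2 * (complex_of_real (y$i) * q y))"

lemma PP_Rs: "q \<in> PP \<Longrightarrow> Rs i q \<in> PP"
  unfolding Rs_def by (intro PP.pa PP_cmult PP_dk PP.px)

lemma PP_Lop: "q \<in> PP \<Longrightarrow> Lop q \<in> PP"
proof -
  assume q: "q \<in> PP"
  have "(\<lambda>x. lap q x + (-2) * eul q x) \<in> PP" by (intro PP.pa PP_lap PP_cmult PP_eul q)
  then show ?thesis unfolding Lop_def[abs_def] by simp
qed

lemma Lop_add: "p \<in> PP \<Longrightarrow> q \<in> PP \<Longrightarrow> Lop (\<lambda>y. p y + q y) x = Lop p x + Lop q x"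
  by (simp add: Lop_def lap_add eul_add algebra_simps)

lemma Lop_cmult: "q \<in> PP \<Longrightarrow> Lop (\<lambda>y. c * q y) x = c * Lop q x"
  by (simp add: Lop_def lap_cmult eul_cmult algebra_simps)

lemma Lop_const: "Lop (\<lambda>y. c) x = 0"
proof -
  have e1: "dk \<xi> (\<lambda>x. c) = (\<lambda>x. 0)" for \<xi> by (rule ext, rule dk_const)
  show ?thesis by (simp add: Lop_def lap_def e1 dk_const eul_const)
qed

lemma Lop_sum: "(\<And>i. i \<in> S \<Longrightarrow> f i \<in> PP) \<Longrightarrow> Lop (\<lambda>y. \<Sum>i\<in>S. f i y) x = (\<Sum>i\<in>S. Lop (f i) x)"
proof (cases "finite S")
  case True
  assume "\<And>i. i \<in> S \<Longrightarrow> f i \<in> PP"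
  with True show ?thesis
  proof (induction S rule: finite_induct)
    case empty then show ?case using Lop_const[of 0 x] by simp
  next
    case (insert a S)
    have "Lop (\<lambda>y. \<Sum>i\<in>insert a S. f i y) x = Lop (\<lambda>y. f a y + (\<Sum>i\<in>S. f i y)) x"
      using insert.hyps by simp
    also have "\<dots> = Lop (f a) x + Lop (\<lambda>y. \<Sum>i\<in>S. f i y) x"
      by (rule Lop_add) (use insert.prems in \<open>auto intro!: PP_sum\<close>)
    finally show ?case using insert by simp
  qed
next
  case False then show ?thesis using Lop_const[of 0 x] by simp
qed

lemma Rs_cmult: "q \<in> PP \<Longrightarrow> Rs i (\<lambda>y. c * q y) x = c * Rs i q x"
  by (simp add: Rs_def dk_cmult algebra_simps)

lemma Lop_Rs: "q \<in> PP \<Longrightarrow> Lop (Rs i q) x = Rs i (Lop q) x - 2 * Rs i q x"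
proof -
  assume q: "q \<in> PP"
  have Pd: "dk (axis i 1) q \<in> PP" by (rule PP_dk[OF q])
  have PA: "(\<lambda>y. (-1) * dk (axis i 1) q y) \<in> PP" by (rule PP_cmult[OF Pd])
  have PB: "(\<lambda>y. 2 * (complex_of_real (y$i) * q y)) \<in> PP" by (rule PP_cmult[OF PP.px[OF q]])
  have ll: "lap (Rs i q) x = (-1) * dk (axis i 1) (lap q) x + 2 * (complex_of_real (x$i) * lap q x + 2 * dk (axis i 1) q x)"
    unfolding Rs_def lap_add[OF PA PB] lap_cmult[OF Pd] lap_cmult[OF PP.px[OF q]] lap_dk[OF q] lap_x[OF q] ..
  have ee: "eul (Rs i q) x = (-1) * (dk (axis i 1) (eul q) x - dk (axis i 1) q x) + 2 * (complex_of_real (x$i) * q x + complex_of_real (x$i) * eul q x)"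
    unfolding Rs_def eul_add[OF PA PB] eul_cmult[OF Pd] eul_cmult[OF PP.px[OF q]] eul_x[OF q]
    using eul_dk[OF q] by simp
  have Lq: "Lop q = (\<lambda>y. lap q y + (-2) * eul q y)" by (rule ext) (simp add: Lop_def)
  have dl: "dk (axis i 1) (Lop q) x = dk (axis i 1) (lap q) x + (-2) * dk (axis i 1) (eul q) x"
    unfolding Lq dk_add[OF PP_lap[OF q] PP_cmult[OF PP_eul[OF q]]] dk_cmult[OF PP_eul[OF q]] ..
  show ?thesis unfolding Lop_def[of "Rs i q"] ll ee
    by (simp add: Rs_def dl Lop_def algebra_simps)
qed

end


lemma PP_prod: "(\<And>i. i \<in> S \<Longrightarrow> f i \<in> PP) \<Longrightarrow> (\<lambda>x. \<Prod>i\<in>S. f i x) \<in> PP"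
proof (cases "finite S")
  case True
  assume "\<And>i. i \<in> S \<Longrightarrow> f i \<in> PP"
  with True show ?thesis
  proof (induction S rule: finite_induct)
    case empty then show ?case using PP.pc[of 1] by simp
  next
    case (insert a S) then show ?case using PP_mult[of "f a" "\<lambda>x. \<Prod>i\<in>S. f i x"] by simp
  qed
next
  case False then show ?thesis using PP.pc[of 1] by simp
qed

lemma PP_power: "q \<in> PP \<Longrightarrow> (\<lambda>x. q x ^ n) \<in> PP"
proof (induction n)
  case 0 then show ?case using PP.pc[of 1] by simp
next
  case (Suc n) then show ?case using PP_mult[of q "\<lambda>x. q x ^ n"] by simp
qed

lemma homog_PP:
  assumes h: "homog_poly k H"
  shows "(\<lambda>y. complex_of_real (H y)) \<in> PP"
proof -
  obtain c where c: "\<And>x. H x = (\<Sum>a\<in>{a. sum a UNIV = k}. c a * (\<Prod>i\<in>UNIV. (x $ i) ^ a i))"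
    using h unfolding homog_poly_def by blast
  have "(\<lambda>y. \<Sum>a\<in>{a. sum a UNIV = k}. complex_of_real (c a) * (\<Prod>i\<in>UNIV. complex_of_real (y $ i) ^ a i)) \<in> PP"
    by (intro PP_sum PP_cmult PP_prod PP_power PP_coord)
  moreover have "complex_of_real (H y) = (\<Sum>a\<in>{a. sum a UNIV = k}. complex_of_real (c a) * (\<Prod>i\<in>UNIV. complex_of_real (y $ i) ^ a i))" for y
    unfolding c by simp
  ultimately show ?thesis by simp
qed

lemma homog_scale:
  fixes H :: "(real,'n::finite) vec \<Rightarrow> real"
  assumes h: "homog_poly k H"
  shows "H (t *\<^sub>R x) = t ^ k * H x"
proof -
  obtain c where c: "\<And>x. H x = (\<Sum>a\<in>{a. sum a UNIV = k}. c a * (\<Prod>i\<in>UNIV. (x $ i) ^ a i))"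
    using h unfolding homog_poly_def by blast
  have pr: "(\<Prod>i\<in>UNIV. ((t *\<^sub>R x) $ i) ^ a i) = t ^ k * (\<Prod>i\<in>UNIV. (x $ i) ^ a i)" if "sum a UNIV = k" for a
  proof -
    have "(\<Prod>i\<in>UNIV. ((t *\<^sub>R x) $ i) ^ a i) = (\<Prod>i\<in>UNIV. t ^ a i) * (\<Prod>i\<in>UNIV. (x $ i) ^ a i)"
      by (simp add: power_mult_distrib prod.distrib)
    also have "(\<Prod>i\<in>UNIV. t ^ a i) = t ^ k" using that by (simp add: power_sum[symmetric])
    finally show ?thesis .
  qed
  show ?thesis unfolding c sum_distrib_left
  proof (rule sum.cong[OF refl])
    fix a :: "'n \<Rightarrow> nat" assume "a \<in> {a. sum a UNIV = k}"
    then have "sum a UNIV = k" by simp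
    then show "c a * (\<Prod>i\<in>UNIV. ((t *\<^sub>R x) $ i) ^ a i) = t ^ k * (c a * (\<Prod>i\<in>UNIV. (x $ i) ^ a i))"
      by (simp only: pr mult.left_commute)
  qed
qed

lemma homog_euler:
  assumes h: "homog_poly k H"
  shows "fd (\<lambda>y. complex_of_real (H y)) x x = of_nat k * complex_of_real (H x)"
proof -
  define H' where "H' = (\<lambda>y. complex_of_real (H y))"
  have P: "H' \<in> PP" unfolding H'_def by (rule homog_PP[OF h])
  have d1: "((\<lambda>t::real. t *\<^sub>R x) has_derivative (\<lambda>h. h *\<^sub>R x)) (at 1)"
    by (rule bounded_linear_imp_has_derivative[OF bounded_linear_scaleR_left])
  have d2: "(H' has_derivative fd H' ((1::real) *\<^sub>R x)) (at ((1::real) *\<^sub>R x))" by (rule PP_diff[OF P])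
  have c1: "((\<lambda>t::real. H' (t *\<^sub>R x)) has_derivative (\<lambda>h. fd H' x (h *\<^sub>R x))) (at 1)"
    using diff_chain_at[OF d1 d2] by (simp add: o_def)
  have eqf: "(\<lambda>t::real. H' (t *\<^sub>R x)) = (\<lambda>t. (complex_of_real t) ^ k * H' x)"
    by (rule ext) (simp add: H'_def homog_scale[OF h])
  have d3: "((\<lambda>t::real. complex_of_real t) has_derivative (\<lambda>h. complex_of_real h)) (at 1)"
    by (rule bounded_linear_imp_has_derivative[OF bounded_linear_of_real])
  have c2: "((\<lambda>t::real. (complex_of_real t) ^ k * H' x) has_derivative
      (\<lambda>h. of_nat k * complex_of_real h * (complex_of_real 1) ^ (k - 1) * H' x)) (at 1)"
    by (rule has_derivative_mult_left[OF has_derivative_power[OF d3]])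
  have "(\<lambda>h. fd H' x (h *\<^sub>R x)) = (\<lambda>h. of_nat k * complex_of_real h * (complex_of_real 1) ^ (k - 1) * H' x)"
    using has_derivative_unique[OF c1[unfolded eqf] c2] .
  then have "fd H' x ((1::real) *\<^sub>R x) = of_nat k * complex_of_real 1 * (complex_of_real 1) ^ (k - 1) * H' x"
    by (rule fun_cong)
  then show ?thesis unfolding H'_def by simp
qed



lemma cl_e: "clif_mult (clif_e i) G C = (\<Sum>B\<in>UNIV. (if (({i} - B) \<union> (B - {i})) = C then clif_sign {i} B else 0) * G B)"
proof -
  have "(\<Sum>B\<in>UNIV. if (A - B) \<union> (B - A) = C then clif_sign A B * (if A = {i} then 1 else 0) * G B else 0)
      = (if A = {i} then (\<Sum>B\<in>UNIV. (if (({i} - B) \<union> (B - {i})) = C then clif_sign {i} B else 0) * G B) else 0)" for A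
  proof (cases "A = {i}")
    case True
    then show ?thesis by (auto intro!: sum.cong)
  next
    case False
    then show ?thesis by (simp cong: if_cong)
  qed
  then show ?thesis unfolding clif_mult_def clif_e_def by simp
qed

lemma cl_x: "clif_mult (clif_x x) G C = (\<Sum>i\<in>UNIV. complex_of_real (x$i) * clif_mult (clif_e i) G C)"
proof -
  let ?P = "\<lambda>A B. (A - B) \<union> (B - A) = C"
  have xe: "clif_x x A = (\<Sum>i\<in>UNIV. complex_of_real (x$i) * clif_e i A)" for A
    unfolding clif_x_def clif_e_def by (rule sum.cong) auto
  have t: "(if ?P A B then clif_sign A B * clif_x x A * G B else 0)
      = (\<Sum>i\<in>UNIV. complex_of_real (x$i) * (if ?P A B then clif_sign A B * clif_e i A * G B else 0))" for A B
    unfolding xe by (cases "?P A B") (simp_all add: sum_distrib_left sum_distrib_right mult_ac)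
  have "clif_mult (clif_x x) G C = (\<Sum>A\<in>UNIV. \<Sum>B\<in>UNIV. \<Sum>i\<in>UNIV. complex_of_real (x$i) * (if ?P A B then clif_sign A B * clif_e i A * G B else 0))"
    unfolding clif_mult_def t ..
  also have "\<dots> = (\<Sum>A\<in>UNIV. \<Sum>i\<in>UNIV. \<Sum>B\<in>UNIV. complex_of_real (x$i) * (if ?P A B then clif_sign A B * clif_e i A * G B else 0))"
    by (rule sum.cong[OF refl], rule sum.swap)
  also have "\<dots> = (\<Sum>i\<in>UNIV. \<Sum>A\<in>UNIV. \<Sum>B\<in>UNIV. complex_of_real (x$i) * (if ?P A B then clif_sign A B * clif_e i A * G B else 0))"
    by (rule sum.swap)
  also have "\<dots> = (\<Sum>i\<in>UNIV. complex_of_real (x$i) * clif_mult (clif_e i) G C)"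
    unfolding clif_mult_def by (simp add: sum_distrib_left)
  finally show ?thesis .
qed

lemma D_plus_expand: "D_plus Rp \<kappa> F x C = (\<Sum>i\<in>UNIV. \<Sum>B\<in>UNIV. (if (({i} - B) \<union> (B - {i})) = C then clif_sign {i} B else 0)
     * ((-1) * dunkl Rp \<kappa> i (\<lambda>y. F y B) x + 2 * (complex_of_real (x$i) * F x B)))"
  unfolding D_plus_def dirac_dunkl_def dunkl_cl_def cl_x cl_e
  by (simp add: sum_distrib_left sum.distrib sum_subtractf algebra_simps sum_negf)

locale dsys2 = dsys R Rp \<kappa> for R Rp :: "((real,'n::{finite,linorder}) vec) set" and \<kappa> :: "(real,'n) vec \<Rightarrow> complex"
begin

lemma dunkl_dk: "dunkl Rp \<kappa> i f x = dk (axis i 1) f x"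
  by (simp add: dunkl_def dk_def inner_axis)

lemma dunkl_dk_fun: "dunkl Rp \<kappa> i f = dk (axis i 1) f"
  by (rule ext, rule dunkl_dk)

lemma dunkl_lap_lap: "dunkl_lap Rp \<kappa> f x = lap f x"
  by (simp add: dunkl_lap_def lap_def dunkl_dk_fun)

lemma euler_eul: "euler_op f x = eul f x"
  by (simp add: euler_op_def eul_def)

lemma D_plus_Rs: "(\<lambda>y. D_plus Rp \<kappa> F y C) = (\<lambda>y. \<Sum>i\<in>UNIV. \<Sum>B\<in>UNIV. (if (({i} - B) \<union> (B - {i})) = C then clif_sign {i} B else 0)
     * Rs i (\<lambda>z. F z B) y)"
  by (rule ext) (simp add: D_plus_expand Rs_def dunkl_dk)

lemma CH_main:
  assumes H: "H \<in> dunkl_harmonics Rp \<kappa> k"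
  shows "\<forall>C. (\<lambda>y. ((D_plus Rp \<kappa> ^^ n) (\<lambda>x. clif_scalar (complex_of_real (H x)))) y C) \<in> PP \<and>
     (\<forall>x. Lop (\<lambda>y. ((D_plus Rp \<kappa> ^^ n) (\<lambda>x. clif_scalar (complex_of_real (H x)))) y C) x
        = -2 * (of_nat n + of_nat k) * ((D_plus Rp \<kappa> ^^ n) (\<lambda>x. clif_scalar (complex_of_real (H x)))) x C)"
proof (induction n)
  case 0
  have hp: "homog_poly k H" and harm: "\<And>x. dunkl_lap Rp \<kappa> (\<lambda>y. complex_of_real (H y)) x = 0"
    using H unfolding dunkl_harmonics_def by auto
  have P: "(\<lambda>y. complex_of_real (H y)) \<in> PP" by (rule homog_PP[OF hp])
  show ?case
  proof (intro allI conjI)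
    fix C :: "'n set"
    show "(\<lambda>y. ((D_plus Rp \<kappa> ^^ 0) (\<lambda>x. clif_scalar (complex_of_real (H x)))) y C) \<in> PP"
      using P PP.pc[of 0] by (cases "C = {}") (simp_all add: clif_scalar_def)
    fix x
    show "Lop (\<lambda>y. ((D_plus Rp \<kappa> ^^ 0) (\<lambda>x. clif_scalar (complex_of_real (H x)))) y C) x
        = -2 * (of_nat 0 + of_nat k) * ((D_plus Rp \<kappa> ^^ 0) (\<lambda>x. clif_scalar (complex_of_real (H x)))) x C"
    proof (cases "C = {}")
      case True
      have "Lop (\<lambda>y. complex_of_real (H y)) x = -2 * of_nat k * complex_of_real (H x)"
        unfolding Lop_def eul_fd[OF P] homog_euler[OF hp] dunkl_lap_lap[symmetric] harm by simp
      then show ?thesis using True by (simp add: clif_scalar_def)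
    next
      case False
      then show ?thesis using Lop_const[of 0 x] by (simp add: clif_scalar_def)
    qed
  qed
next
  case (Suc n)
  define G where "G = (D_plus Rp \<kappa> ^^ n) (\<lambda>x. clif_scalar (complex_of_real (H x)))"
  define s where "s = (\<lambda>(i::'n) (B::'n set) (C::'n set). (if (({i} - B) \<union> (B - {i})) = C then clif_sign {i} B else (0::complex)))"
  define lam where "lam = -2 * (of_nat n + of_nat k :: complex)"
  have GP: "(\<lambda>y. G y B) \<in> PP" for B using Suc.IH unfolding G_def by blast
  have GL: "Lop (\<lambda>y. G y B) = (\<lambda>y. lam * G y B)" for B
    by (rule ext) (use Suc.IH in \<open>simp add: G_def lam_def\<close>)
  have eqS: "(D_plus Rp \<kappa> ^^ Suc n) (\<lambda>x. clif_scalar (complex_of_real (H x))) = D_plus Rp \<kappa> G"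
    unfolding G_def by simp
  have comp: "(\<lambda>y. D_plus Rp \<kappa> G y C) = (\<lambda>y. \<Sum>i\<in>UNIV. \<Sum>B\<in>UNIV. s i B C * Rs i (\<lambda>z. G z B) y)" for C
    unfolding s_def by (rule D_plus_Rs)
  have Pin: "(\<lambda>y. \<Sum>B\<in>UNIV. s i B C * Rs i (\<lambda>z. G z B) y) \<in> PP" for i C
    by (intro PP_sum PP_cmult PP_Rs GP)
  show ?case unfolding eqS
  proof (intro allI conjI)
    fix C :: "'n set"
    show "(\<lambda>y. D_plus Rp \<kappa> G y C) \<in> PP" unfolding comp by (intro PP_sum Pin)
    fix x
    have "Lop (\<lambda>y. D_plus Rp \<kappa> G y C) x = (\<Sum>i\<in>UNIV. \<Sum>B\<in>UNIV. s i B C * Lop (Rs i (\<lambda>z. G z B)) x)"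
      unfolding comp Lop_sum[OF Pin] Lop_sum[OF PP_cmult[OF PP_Rs[OF GP]]] Lop_cmult[OF PP_Rs[OF GP]] ..
    also have "\<dots> = (\<Sum>i\<in>UNIV. \<Sum>B\<in>UNIV. s i B C * ((lam - 2) * Rs i (\<lambda>z. G z B) x))"
      unfolding Lop_Rs[OF GP] GL Rs_cmult[OF GP] by (simp add: algebra_simps)
    also have "\<dots> = (lam - 2) * D_plus Rp \<kappa> G x C"
      by (subst fun_cong[OF comp]) (simp add: sum_distrib_left algebra_simps)
    also have "lam - 2 = -2 * (of_nat (Suc n) + of_nat k)"
      by (simp add: lam_def algebra_simps)
    finally show "Lop (\<lambda>y. D_plus Rp \<kappa> G y C) x = -2 * (of_nat (Suc n) + of_nat k) * D_plus Rp \<kappa> G x C" .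
  qed
qed

end


theorem theorem3p3:
  fixes R Rp :: "((real,'n::{finite,linorder}) vec) set"
    and \<kappa> :: "(real,'n) vec \<Rightarrow> complex"
    and H :: "(real,'n) vec \<Rightarrow> real"
    and k t :: nat
  assumes "reduced_root_system R"
    and "\<forall>\<alpha>\<in>R. \<alpha> \<bullet> \<alpha> = 2"
    and "positive_subsystem R Rp"
    and "multiplicity_function R \<kappa>"
    and "H \<in> dunkl_harmonics Rp \<kappa> k"
    and "t > 0"
  shows "\<forall>x A. dunkl_lap Rp \<kappa> (\<lambda>y. clifford_hermite Rp \<kappa> t H y A) x
                 - 2 * euler_op (\<lambda>y. clifford_hermite Rp \<kappa> t H y A) x
               = - 2 * of_nat (2 * t + k) * clifford_hermite Rp \<kappa> t H x A"
proof -
  note rs = assms(1)[unfolded reduced_root_system_def]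
  obtain b where b: "\<forall>\<alpha>\<in>R. \<alpha> \<bullet> b \<noteq> 0" and Rp: "Rp = {\<alpha>\<in>R. \<alpha> \<bullet> b > 0}"
    using assms(3) unfolding positive_subsystem_def by blast
  have n2: "\<alpha> \<in> R \<Longrightarrow> \<alpha> \<bullet> \<alpha> = 2" for \<alpha> using assms(2) by blast
  have rR: "\<alpha> \<in> R \<Longrightarrow> \<beta> \<in> R \<Longrightarrow> root_refl \<alpha> \<beta> \<in> R" for \<alpha> \<beta> using rs by blast
  have nR: "\<alpha> \<in> R \<Longrightarrow> - \<alpha> \<in> R" for \<alpha> using rR[of \<alpha> \<alpha>] rr_self[OF n2] by simp
  have g: "root_refl \<alpha> \<in> refl_group R" if "\<alpha> \<in> R" for \<alpha>
    using refl_group.rg_step[OF refl_group.rg_id that] by simp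
  interpret D: dsys2 R Rp \<kappa>
  proof (unfold_locales)
    show "finite R" using rs by blast
    show "\<And>\<alpha>. \<alpha> \<in> R \<Longrightarrow> \<alpha> \<bullet> \<alpha> = 2" by (rule n2)
    show "\<And>\<alpha> \<beta>. \<alpha> \<in> R \<Longrightarrow> \<beta> \<in> R \<Longrightarrow> root_refl \<alpha> \<beta> \<in> R" by (rule rR)
    show "Rp \<subseteq> R" using Rp by auto
    show "\<And>\<alpha>. \<alpha> \<in> R \<Longrightarrow> (\<alpha> \<in> Rp) = (- \<alpha> \<notin> Rp)"
    proof -
      fix \<alpha> assume a: "\<alpha> \<in> R"
      have "\<alpha> \<bullet> b \<noteq> 0" using a b by blast
      then show "(\<alpha> \<in> Rp) = (- \<alpha> \<notin> Rp)" using a nR[OF a] unfolding Rp by auto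
    qed
    show "\<And>\<alpha> \<beta>. \<alpha> \<in> R \<Longrightarrow> \<beta> \<in> R \<Longrightarrow> \<kappa> (root_refl \<alpha> \<beta>) = \<kappa> \<beta>"
      using assms(4) g unfolding multiplicity_function_def by blast
  qed
  have M: "\<forall>C. (\<lambda>y. ((D_plus Rp \<kappa> ^^ (2*t)) (\<lambda>x. clif_scalar (complex_of_real (H x)))) y C) \<in> PP \<and>
     (\<forall>x. D.Lop (\<lambda>y. ((D_plus Rp \<kappa> ^^ (2*t)) (\<lambda>x. clif_scalar (complex_of_real (H x)))) y C) x
        = -2 * (of_nat (2*t) + of_nat k) * ((D_plus Rp \<kappa> ^^ (2*t)) (\<lambda>x. clif_scalar (complex_of_real (H x)))) x C)"
    by (rule D.CH_main[OF assms(5)])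
  show ?thesis
  proof (intro allI)
    fix x A
    show "dunkl_lap Rp \<kappa> (\<lambda>y. clifford_hermite Rp \<kappa> t H y A) x
                 - 2 * euler_op (\<lambda>y. clifford_hermite Rp \<kappa> t H y A) x
               = - 2 * of_nat (2 * t + k) * clifford_hermite Rp \<kappa> t H x A"
      using M unfolding D.dunkl_lap_lap D.euler_eul clifford_hermite_def D.Lop_def
      by simp
  qed
qed


end
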